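(* Let $u\in C^0(B_1)\cap C^2(\Omega^+(u)\cup\Omega^-(u))$ be harmonic on $\Omega^+(u)\cup\Omega^-(u)$, suppose $\Gamma(u)\neq\emptyset$, and suppose that $u_x$ and $u_y$ each have a non-strict sign in $\Omega^+(u)\cup\Omega^-(u)$ and $|u_x|\le M|u_y|$ there for a constant $M$. Then: (a) each connected component of a nonzero level set of $u$ is the graph of a monotone real-analytic function of $x$ with Lipschitz constant at most $M$; (b) each connected component of $\Gamma(u)$ is the graph of a monotone Lipschitz continuous function of $x$ with Lipschitz constant at most $M$.
   Context: $B_1$ is the open unit disk in $\mathbb{R}^2$. For $u\in C^0(B_1)$: $\Omega^+(u)=\operatorname{int}\{u\ge0\}$, $\Omega^-(u)=\{u<0\}$, and the free boundary is $\Gamma(u)=\partial\Omega^+(u)\setminus\partial B_1$. "Non-strict sign" means, e.g., $u_x\ge0$ throughout or $u_x\le0$ throughout the set. *)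

theory Defs
  imports "HOL-Analysis.Analysis"
begin

definition B1 :: "(real \<times> real) set" where
  "B1 = ball 0 1"

definition Omega_plus :: "(real \<times> real \<Rightarrow> real) \<Rightarrow> (real \<times> real) set" where
  "Omega_plus u = interior {p \<in> B1. u p \<ge> 0}"

definition Omega_minus :: "(real \<times> real \<Rightarrow> real) \<Rightarrow> (real \<times> real) set" where
  "Omega_minus u = {p \<in> B1. u p < 0}"

definition free_boundary :: "(real \<times> real \<Rightarrow> real) \<Rightarrow> (real \<times> real) set" where
  "free_boundary u = frontier (Omega_plus u) - sphere 0 1"

definition px :: "(real \<times> real \<Rightarrow> real) \<Rightarrow> real \<times> real \<Rightarrow> real" where
  "px u p = deriv (\<lambda>t. u (t, snd p)) (fst p)"

definition py :: "(real \<times> real \<Rightarrow> real) \<Rightarrow> real \<times> real \<Rightarrow> real" where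
  "py u p = deriv (\<lambda>t. u (fst p, t)) (snd p)"

definition C2_on :: "(real \<times> real) set \<Rightarrow> (real \<times> real \<Rightarrow> real) \<Rightarrow> bool" where
  "C2_on S u \<longleftrightarrow> u differentiable_on S \<and> px u differentiable_on S \<and> py u differentiable_on S
     \<and> continuous_on S u \<and> continuous_on S (px u) \<and> continuous_on S (py u)
     \<and> continuous_on S (px (px u)) \<and> continuous_on S (py (px u))
     \<and> continuous_on S (px (py u)) \<and> continuous_on S (py (py u))"

definition harmonic_on :: "(real \<times> real) set \<Rightarrow> (real \<times> real \<Rightarrow> real) \<Rightarrow> bool" where
  "harmonic_on S u \<longleftrightarrow> (\<forall>p\<in>S. px (px u) p + py (py u) p = 0)"

definition real_analytic_on :: "real set \<Rightarrow> (real \<Rightarrow> real) \<Rightarrow> bool" where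
  "real_analytic_on I f \<longleftrightarrow>
     (\<forall>x0\<in>I. \<exists>r>0. \<exists>a::nat \<Rightarrow> real. \<forall>x\<in>I. \<bar>x - x0\<bar> < r \<longrightarrow> (\<lambda>n. a n * (x - x0) ^ n) sums f x)"

definition graph_over :: "real set \<Rightarrow> (real \<Rightarrow> real) \<Rightarrow> (real \<times> real) set" where
  "graph_over I f = {(x, f x) | x. x \<in> I}"

definition nonstrict_sign_on :: "(real \<times> real) set \<Rightarrow> (real \<times> real \<Rightarrow> real) \<Rightarrow> bool" where
  "nonstrict_sign_on S g \<longleftrightarrow> (\<forall>p\<in>S. g p \<ge> 0) \<or> (\<forall>p\<in>S. g p \<le> 0)"

end

theory Submission
  imports Defs "HOL-Complex_Analysis.Complex_Analysis"
begin


lemma frechet_partials: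
  fixes f :: "real \<times> real \<Rightarrow> real"
  assumes "(f has_derivative D) (at (x,y))"
  shows "((\<lambda>t. f (t,y)) has_real_derivative D (1,0)) (at x)"
    and "((\<lambda>t. f (x,t)) has_real_derivative D (0,1)) (at y)"
    and "px f (x,y) = D (1,0)" and "py f (x,y) = D (0,1)"
    and "D = (\<lambda>h. D (1,0) * fst h + D (0,1) * snd h)"
proof -
  have lin: "linear D" using assms has_derivative_linear by blast
  have sc1: "D (h,0) = h * D (1,0)" for h
    using linear_scale[OF lin, of h "(1,0)"] by simp
  have sc2: "D (0,h) = h * D (0,1)" for h
    using linear_scale[OF lin, of h "(0,1)"] by simp
  have d1: "((\<lambda>t. (t,y)) has_derivative (\<lambda>h. (h,0))) (at x)"
    by (auto intro!: derivative_eq_intros)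
  have d2: "((\<lambda>t. (x,t)) has_derivative (\<lambda>h. (0,h))) (at y)"
    by (auto intro!: derivative_eq_intros)
  have "((\<lambda>t. f (t,y)) has_derivative (\<lambda>h. D (h,0))) (at x)"
    using diff_chain_at[OF d1, of f D] assms by (simp add: o_def)
  moreover have "(\<lambda>h. D (h,0)) = (*) (D (1,0))"
  proof
    fix h :: real show "D (h,0) = D (1,0) * h" using sc1[of h] by (simp only: mult.commute)
  qed
  ultimately show A: "((\<lambda>t. f (t,y)) has_real_derivative D (1,0)) (at x)"
    by (simp add: has_field_derivative_def)
  have "((\<lambda>t. f (x,t)) has_derivative (\<lambda>h. D (0,h))) (at y)"
    using diff_chain_at[OF d2, of f D] assms by (simp add: o_def)
  moreover have "(\<lambda>h. D (0,h)) = (*) (D (0,1))"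
  proof
    fix h :: real show "D (0,h) = D (0,1) * h" using sc2[of h] by (simp only: mult.commute)
  qed
  ultimately show B: "((\<lambda>t. f (x,t)) has_real_derivative D (0,1)) (at y)"
    by (simp add: has_field_derivative_def)
  show "px f (x,y) = D (1,0)" unfolding px_def using A DERIV_imp_deriv by simp
  show "py f (x,y) = D (0,1)" unfolding py_def using B DERIV_imp_deriv by simp
  show "D = (\<lambda>h. D (1,0) * fst h + D (0,1) * snd h)"
  proof
    fix h :: "real \<times> real"
    have "h = (fst h, 0) + (0, snd h)" by simp
    then have "D h = D (fst h, 0) + D (0, snd h)" by (metis linear_add[OF lin])
    then show "D h = D (1,0) * fst h + D (0,1) * snd h" using sc1[of "fst h"] sc2[of "snd h"] by (simp only: mult.commute)
  qed
qed

lemma frechet_partials':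
  fixes f :: "real \<times> real \<Rightarrow> real"
  assumes "f differentiable (at p)"
  shows "(f has_derivative (\<lambda>h. px f p * fst h + py f p * snd h)) (at p)"
proof -
  obtain D where D: "(f has_derivative D) (at p)" using assms differentiable_def by blast
  obtain x y where p: "p = (x,y)" by (cases p)
  have D': "(f has_derivative D) (at (x,y))" using D p by simp
  have "(\<lambda>h. px f (x,y) * fst h + py f (x,y) * snd h) = D"
    unfolding frechet_partials(3)[OF D'] frechet_partials(4)[OF D']
    by (rule frechet_partials(5)[OF D', symmetric])
  then show ?thesis using D' p by simp
qed

lemma mono_nonzero_deriv_pos:
  fixes h :: "real \<Rightarrow> real"
  assumes "a \<le> b" and cont: "continuous_on {a..b} h"
    and der: "\<And>t. a < t \<Longrightarrow> t < b \<Longrightarrow> h t \<noteq> 0 \<Longrightarrow> (\<exists>D. DERIV h t :> D \<and> D \<ge> 0)"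
    and pos: "h a > 0"
  shows "h a \<le> h b"
proof (cases "\<exists>t\<in>{a..b}. h t \<le> 0")
  case False
  show ?thesis
  proof (rule DERIV_nonneg_imp_increasing_open[OF assms(1) _ cont])
    fix x assume "a < x" "x < b"
    then have "\<not> h x \<le> 0" using False by (meson atLeastAtMost_iff less_imp_le)
    then have "h x \<noteq> 0" by simp
    then show "\<exists>y. DERIV h x :> y \<and> y \<ge> 0" using der \<open>a < x\<close> \<open>x < b\<close> by blast
  qed
next
  case True
  define Z where "Z = {t\<in>{a..b}. h t \<le> 0}"
  have Zne: "Z \<noteq> {}" using True Z_def by auto
  have Zc: "closed Z"
  proof -
    have "closed ({a..b} \<inter> h -` {..0})"
      by (rule continuous_closed_preimage[OF cont]) auto
    moreover have "Z = {a..b} \<inter> h -` {..0}" by (auto simp: Z_def)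
    ultimately show ?thesis by simp
  qed
  have Zb: "bdd_below Z" unfolding Z_def by (rule bdd_belowI[of _ a]) auto
  define z where "z = Inf Z"
  have zZ: "z \<in> Z" unfolding z_def using closed_contains_Inf[OF Zne Zb Zc] .
  have za: "a \<le> z" "z \<le> b" using zZ by (auto simp: Z_def)
  have "z \<noteq> a" using zZ pos by (auto simp: Z_def)
  have below: "h t > 0" if "a \<le> t" "t < z" for t
  proof (rule ccontr)
    assume "\<not> h t > 0"
    then have "t \<in> Z" using that za by (auto simp: Z_def)
    then have "z \<le> t" unfolding z_def using Zb by (simp add: cInf_lower)
    then show False using that by simp
  qed
  have "h a \<le> h z"
  proof (rule DERIV_nonneg_imp_increasing_open[OF za(1) _ continuous_on_subset[OF cont]])
    fix x assume x: "a < x" "x < z"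
    then have "h x \<noteq> 0" using below[of x] by simp
    then show "\<exists>y. DERIV h x :> y \<and> y \<ge> 0" using der x za by simp
  next
    show "{a..z} \<subseteq> {a..b}" using za by auto
  qed
  then show ?thesis using zZ pos by (auto simp: Z_def)
qed

lemma mono_nonzero_deriv:
  fixes h :: "real \<Rightarrow> real"
  assumes "a \<le> b" and cont: "continuous_on {a..b} h"
    and der: "\<And>t. a < t \<Longrightarrow> t < b \<Longrightarrow> h t \<noteq> 0 \<Longrightarrow> (\<exists>D. DERIV h t :> D \<and> D \<ge> 0)"
  shows "h a \<le> h b"
proof (cases "h a > 0")
  case True
  then show ?thesis using mono_nonzero_deriv_pos[OF assms] by simp
next
  case False
  show ?thesis
  proof (cases "h b < 0")
    case False
    then show ?thesis using \<open>\<not> h a > 0\<close> by simp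
  next
    case True
    define k where "k t = - h (a + b - t)" for t
    have kc: "continuous_on {a..b} k"
    proof -
      have "continuous_on {a..b} (\<lambda>t. h (a + b - t))"
        by (rule continuous_on_compose2[OF cont]) (auto intro!: continuous_intros)
      then show ?thesis unfolding k_def by (rule continuous_on_minus)
    qed
    have kd: "\<exists>D. DERIV k t :> D \<and> D \<ge> 0" if tt: "a < t" "t < b" "k t \<noteq> 0" for t
    proof -
      obtain D where D: "DERIV h (a+b-t) :> D" "D \<ge> 0"
        using der[of "a+b-t"] tt by (auto simp: k_def)
      have dd: "DERIV (\<lambda>t. a + b - t) t :> -1" by (auto intro!: derivative_eq_intros)
      have d3: "DERIV (\<lambda>t. h (a + b - t)) t :> D * -1" by (rule DERIV_chain2[OF D(1) dd])
      have "DERIV k t :> D"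
        unfolding k_def using DERIV_minus[OF d3] by simp
      then show ?thesis using D by blast
    qed
    have "k a \<le> k b"
      by (rule mono_nonzero_deriv_pos[OF assms(1) kc kd]) (use True in \<open>auto simp: k_def\<close>)
    then show ?thesis by (simp add: k_def)
  qed
qed




lemma arith_gd:
  fixes A B M w1 w2 :: real
  assumes "A \<ge> 0" "B \<ge> 0" "A \<le> M*B" "M \<ge> 0" "w2 \<ge> M * max 0 (-w1)"
  shows "A*w1 + B*w2 \<ge> 0"
proof (cases "w1 \<ge> 0")
  case True
  then have "w2 \<ge> 0" using assms by simp
  then show ?thesis using True assms by simp
next
  case False
  then have "A*w1 \<ge> (M*B)*w1" using assms by (simp add: mult_right_mono_neg)
  moreover have "B*w2 \<ge> B*(M*(-w1))"
  proof -
    have "M*(-w1) \<le> w2" using assms False by simp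
    then show ?thesis using mult_left_mono assms(2) by blast
  qed
  ultimately show ?thesis by (simp add: algebra_simps)
qed

lemma arith_sg:
  fixes A B M w1 w2 :: real
  assumes "A \<ge> 0" "B > 0" "A \<le> M*B" "M \<ge> 0" "w2 > M * max 0 (-w1)"
  shows "A*w1 + B*w2 > 0"
proof (cases "w1 \<ge> 0")
  case True
  then have "w2 > 0" using assms by simp
  then show ?thesis using True assms by (simp add: add_nonneg_pos)
next
  case False
  then have "A*w1 \<ge> (M*B)*w1" using assms by (simp add: mult_right_mono_neg)
  moreover have "B*w2 > B*(M*(-w1))"
  proof -
    have "M*(-w1) < w2" using assms False by simp
    then show ?thesis using mult_strict_left_mono assms(2) by blast
  qed
  ultimately show ?thesis by (simp add: algebra_simps)
qed

lemma graph_lemma: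
  fixes T :: "(real \<times> real) set" and M a b :: real
  assumes M: "M \<ge> 0" and a: "a = 1 \<or> a = -1" and b: "b = 1 \<or> b = -1" and conn: "connected T"
    and nsg: "\<And>P Q. P \<in> T \<Longrightarrow> Q \<in> T \<Longrightarrow> \<not> (b * (snd Q - snd P) > M * max 0 (- a * (fst Q - fst P)))"
  shows "\<exists>I f. is_interval I \<and> T = graph_over I f \<and> (mono_on I f \<or> antimono_on I f)
           \<and> M-lipschitz_on I f \<and> (\<forall>x y. (x,y) \<in> T \<longrightarrow> x \<in> I \<and> f x = y)"
proof -
  have key1: "\<bar>y2 - y1\<bar> \<le> M * \<bar>x2 - x1\<bar>" if "(x1,y1) \<in> T" "(x2,y2) \<in> T" for x1 y1 x2 y2
  proof (rule ccontr)
    assume A: "\<not> ?thesis"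
    have n1: "\<not> (b * (y2 - y1) > M * max 0 (- a * (x2 - x1)))" using nsg[OF that(1) that(2)] by simp
    have n2: "\<not> (b * (y1 - y2) > M * max 0 (- a * (x1 - x2)))" using nsg[OF that(2) that(1)] by simp
    have m1: "M * max 0 (- a * (x2 - x1)) \<le> M * \<bar>x2 - x1\<bar>"
      using a by (intro mult_left_mono M) auto
    have m2: "M * max 0 (- a * (x1 - x2)) \<le> M * \<bar>x2 - x1\<bar>"
      using a by (intro mult_left_mono M) auto
    have ab: "\<bar>b*(y2-y1)\<bar> = \<bar>y2-y1\<bar>" using b by auto
    have eq: "b*(y1-y2) = -(b*(y2-y1))" by (simp add: algebra_simps)
    show False
    proof (cases "b*(y2-y1) \<ge> 0")
      case True
      then have "\<bar>b*(y2-y1)\<bar> = b*(y2-y1)" by simp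
      then show False using A n1 m1 ab by linarith
    next
      case False
      then have "\<bar>b*(y2-y1)\<bar> = -(b*(y2-y1))" by simp
      then show False using A n2 m2 ab eq by linarith
    qed
  qed
  have key2: "a * b * (y2 - y1) \<le> 0" if "(x1,y1) \<in> T" "(x2,y2) \<in> T" "x1 < x2" for x1 y1 x2 y2
  proof -
    have n1: "\<not> (b * (y2 - y1) > M * max 0 (- a * (x2 - x1)))" using nsg[OF that(1) that(2)] by simp
    have n2: "\<not> (b * (y1 - y2) > M * max 0 (- a * (x1 - x2)))" using nsg[OF that(2) that(1)] by simp
    show ?thesis
    proof (cases "a = 1")
      case True
      then have "max 0 (- a * (x2 - x1)) = 0" using that(3) by simp
      then have "b*(y2-y1) \<le> 0" using n1 by simp
      then show ?thesis using True by simp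
    next
      case False
      then have a': "a = -1" using a by simp
      then have "max 0 (- a * (x1 - x2)) = 0" using that(3) by simp
      then have "b*(y1-y2) \<le> 0" using n2 by simp
      moreover have "a * b * (y2 - y1) = b*(y1-y2)" using a' by (simp add: algebra_simps)
      ultimately show ?thesis by linarith
    qed
  qed
  have uniq: "y1 = y2" if "(x,y1) \<in> T" "(x,y2) \<in> T" for x y1 y2
    using key1[OF that] by simp
  define I where "I = fst ` T"
  define f where "f x = (SOME y. (x,y) \<in> T)" for x
  have fT: "(x, f x) \<in> T" if "x \<in> I" for x
  proof -
    from that obtain p where p: "p \<in> T" "x = fst p" unfolding I_def by blast
    then have "(x, snd p) \<in> T" by simp
    then show ?thesis unfolding f_def by (rule someI)
  qed
  have feq: "x \<in> I \<and> f x = y" if "(x,y) \<in> T" for x y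
  proof -
    have xI: "x \<in> I" using that by (force simp: I_def)
    show ?thesis using uniq[OF fT[OF xI] that] xI by simp
  qed
  have intv: "is_interval I"
  proof -
    have "connected I" unfolding I_def
      by (rule connected_continuous_image[OF _ conn]) (intro continuous_intros)
    then show ?thesis by (simp add: is_interval_connected_1)
  qed
  have gr: "T = graph_over I f"
    unfolding graph_over_def
  proof safe
    fix x y assume "(x,y) \<in> T"
    then show "\<exists>xa. (x, y) = (xa, f xa) \<and> xa \<in> I" using feq by metis
  next
    fix x assume "x \<in> I" then show "(x, f x) \<in> T" by (rule fT)
  qed
  have lip: "M-lipschitz_on I f"
  proof (rule lipschitz_onI[OF _ M])
    fix x y assume "x \<in> I" "y \<in> I"
    then show "dist (f x) (f y) \<le> M * dist x y"
      using key1[OF fT fT, of x y] by (simp add: dist_real_def abs_minus_commute)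
  qed
  have mon: "mono_on I f \<or> antimono_on I f"
  proof (cases "a * b = 1")
    case True
    have "antimono_on I f"
      unfolding monotone_on_def
    proof (intro ballI impI)
      fix x y assume xy: "x \<in> I" "y \<in> I" "x \<le> y"
      show "f y \<le> f x"
      proof (cases "x = y")
        case False
        then show ?thesis using key2[OF fT[OF xy(1)] fT[OF xy(2)]] xy True by simp
      qed simp
    qed
    then show ?thesis by blast
  next
    case False
    then have ab: "a * b = -1" using a b by auto
    have "mono_on I f"
      unfolding monotone_on_def
    proof (intro ballI impI)
      fix x y assume xy: "x \<in> I" "y \<in> I" "x \<le> y"
      show "f x \<le> f y"
      proof (cases "x = y")
        case False
        then show ?thesis using key2[OF fT[OF xy(1)] fT[OF xy(2)]] xy ab by simp
      qed simp
    qed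
    then show ?thesis by blast
  qed
  show ?thesis
    by (rule exI[of _ I], rule exI[of _ f]) (intro conjI intv gr mon lip allI impI feq)
qed

locale L =
  fixes u :: "real \<times> real \<Rightarrow> real" and M a b :: real
  assumes cont: "continuous_on B1 u"
    and C2: "C2_on (Omega_plus u \<union> Omega_minus u) u"
    and harm: "harmonic_on (Omega_plus u \<union> Omega_minus u) u"
    and Gamma_ne: "free_boundary u \<noteq> {}"
    and bound: "\<forall>p \<in> Omega_plus u \<union> Omega_minus u. \<bar>px u p\<bar> \<le> M * \<bar>py u p\<bar>"
    and a1: "a = 1 \<or> a = -1" and b1: "b = 1 \<or> b = -1"
    and ax: "\<forall>p \<in> Omega_plus u \<union> Omega_minus u. a * px u p \<ge> 0"
    and bY: "\<forall>p \<in> Omega_plus u \<union> Omega_minus u. b * py u p \<ge> 0"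
begin

abbreviation "S \<equiv> Omega_plus u \<union> Omega_minus u"

lemma openB1: "open B1" by (simp add: B1_def)
lemma Op_sub: "Omega_plus u \<subseteq> {p \<in> B1. u p \<ge> 0}" unfolding Omega_plus_def using interior_subset by blast
lemma open_Op: "open (Omega_plus u)" unfolding Omega_plus_def by simp
lemma Om_eq: "Omega_minus u = B1 \<inter> u -` {..<0}" by (auto simp: Omega_minus_def)
lemma open_Om: "open (Omega_minus u)" unfolding Om_eq by (rule continuous_open_preimage[OF cont openB1]) auto
lemma open_S: "open S" using open_Op open_Om by blast
lemma S_sub: "S \<subseteq> B1" using Op_sub by (auto simp: Omega_minus_def)

lemma nz_S: assumes "p \<in> B1" "u p \<noteq> 0" shows "p \<in> S"
proof (cases "u p < 0")
  case True then show ?thesis using assms by (auto simp: Omega_minus_def)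
next
  case False
  then have pos: "u p > 0" using assms by simp
  have o: "open (B1 \<inter> u -` {0<..})" by (rule continuous_open_preimage[OF cont openB1]) auto
  have "B1 \<inter> u -` {0<..} \<subseteq> {p \<in> B1. u p \<ge> 0}" by auto
  then have "B1 \<inter> u -` {0<..} \<subseteq> Omega_plus u" unfolding Omega_plus_def using o interior_maximal by blast
  then show ?thesis using assms pos by auto
qed

lemma u_diff: assumes "q \<in> S" shows "(u has_derivative (\<lambda>h. px u q * fst h + py u q * snd h)) (at q)"
proof -
  have "u differentiable_on S" using C2 by (simp add: C2_on_def)
  then have "u differentiable (at q)" using assms open_S by (simp add: differentiable_on_eq_differentiable_at)
  then show ?thesis by (rule frechet_partials')
qed

lemma seg_deriv: assumes "P + t *\<^sub>R v \<in> S"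
  shows "((\<lambda>s. u (P + s *\<^sub>R v)) has_real_derivative (px u (P + t *\<^sub>R v) * fst v + py u (P + t *\<^sub>R v) * snd v)) (at t)"
proof -
  have d: "((\<lambda>s. P + s *\<^sub>R v) has_derivative (\<lambda>h. h *\<^sub>R v)) (at t)" by (auto intro!: derivative_eq_intros)
  have "((\<lambda>s. u (P + s *\<^sub>R v)) has_derivative (\<lambda>h. px u (P + t *\<^sub>R v) * fst (h *\<^sub>R v) + py u (P + t *\<^sub>R v) * snd (h *\<^sub>R v))) (at t)"
    using diff_chain_at[OF d u_diff[OF assms]] by (simp add: o_def)
  moreover have "(\<lambda>h. px u (P + t *\<^sub>R v) * fst (h *\<^sub>R v) + py u (P + t *\<^sub>R v) * snd (h *\<^sub>R v))
      = (*) (px u (P + t *\<^sub>R v) * fst v + py u (P + t *\<^sub>R v) * snd v)"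
    by (auto simp: fun_eq_iff algebra_simps)
  ultimately show ?thesis by (simp add: has_field_derivative_def)
qed

lemma seg_in: assumes "P \<in> B1" "P + v \<in> B1" "0 \<le> t" "t \<le> 1" shows "P + t *\<^sub>R v \<in> B1"
proof -
  have "(1-t) *\<^sub>R P + t *\<^sub>R (P+v) \<in> B1"
    using convexD[OF convex_ball[of 0 1], of P "P+v" "1-t" t] assms by (simp add: B1_def)
  moreover have "(1-t) *\<^sub>R P + t *\<^sub>R (P+v) = P + t *\<^sub>R v" by (simp add: algebra_simps)
  ultimately show ?thesis by simp
qed

definition dm where "dm v \<longleftrightarrow> (\<forall>q\<in>S. u q \<noteq> 0 \<longrightarrow> 0 \<le> px u q * fst v + py u q * snd v)"
definition sdm where "sdm v \<longleftrightarrow> (\<forall>q\<in>S. u q \<noteq> 0 \<longrightarrow> 0 < px u q * fst v + py u q * snd v)"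

lemma dm_mono: assumes "dm v" "P \<in> B1" "P + v \<in> B1" shows "u P \<le> u (P + v)"
proof -
  define h where "h s = u (P + s *\<^sub>R v)" for s
  have hc: "continuous_on {0..1} h" unfolding h_def
    by (rule continuous_on_compose2[OF cont]) (auto intro!: continuous_intros seg_in assms)
  have "h 0 \<le> h 1"
  proof (rule mono_nonzero_deriv[OF _ hc])
    fix t :: real assume t: "0 < t" "t < 1" "h t \<noteq> 0"
    have inB: "P + t *\<^sub>R v \<in> B1" using seg_in assms t by simp
    have inS: "P + t *\<^sub>R v \<in> S" using nz_S[OF inB] t by (simp add: h_def)
    have "0 \<le> px u (P + t *\<^sub>R v) * fst v + py u (P + t *\<^sub>R v) * snd v"
      using assms(1) inS t unfolding dm_def h_def by blast
    then show "\<exists>D. DERIV h t :> D \<and> D \<ge> 0" using seg_deriv[OF inS] unfolding h_def by blast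
  qed simp
  then show ?thesis by (simp add: h_def)
qed

lemma sdm_contra: assumes "sdm v" "P \<in> B1" "P + v \<in> B1" "u P = u (P+v)" "u P \<noteq> 0" shows False
proof -
  have dmv: "dm v" using assms(1) unfolding sdm_def dm_def by (meson less_imp_le)
  have dms: "dm (s *\<^sub>R v)" if "s \<ge> 0" for s
    unfolding dm_def
  proof (intro ballI impI)
    fix q assume q: "q \<in> S" "u q \<noteq> 0"
    have "0 \<le> px u q * fst v + py u q * snd v" using dmv q unfolding dm_def by blast
    moreover have "px u q * fst (s *\<^sub>R v) + py u q * snd (s *\<^sub>R v) = s * (px u q * fst v + py u q * snd v)"
      by (simp add: algebra_simps)
    ultimately show "0 \<le> px u q * fst (s *\<^sub>R v) + py u q * snd (s *\<^sub>R v)"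
      using that by simp
  qed
  have const: "u (P + s *\<^sub>R v) = u P" if "0 \<le> s" "s \<le> 1" for s
  proof -
    have A: "P + s *\<^sub>R v \<in> B1" by (rule seg_in) (use assms that in auto)
    have e: "(P + s *\<^sub>R v) + (1-s) *\<^sub>R v = P + v" by (simp add: algebra_simps)
    have "u P \<le> u (P + s *\<^sub>R v)" using dm_mono[OF dms[OF that(1)] assms(2) A] .
    moreover have "u (P + s *\<^sub>R v) \<le> u ((P + s *\<^sub>R v) + (1-s) *\<^sub>R v)"
      by (rule dm_mono[OF dms A]) (use that in simp, subst e, rule assms(3))
    ultimately show ?thesis using assms(4) e by simp
  qed
  have inB: "P + (1/2) *\<^sub>R v \<in> B1" by (rule seg_in) (use assms in auto)
  have inS: "P + (1/2) *\<^sub>R v \<in> S" using nz_S[OF inB] const[of "1/2"] assms by simp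
  note D = seg_deriv[OF inS]
  have D0: "((\<lambda>s. u P) has_real_derivative (px u (P + (1/2) *\<^sub>R v) * fst v + py u (P + (1/2) *\<^sub>R v) * snd v)) (at (1/2))"
    by (rule has_field_derivative_transform_within_open[OF D, of "{0<..<1}"]) (use const in auto)
  then have "px u (P + (1/2) *\<^sub>R v) * fst v + py u (P + (1/2) *\<^sub>R v) * snd v = 0"
    using DERIV_const DERIV_unique by blast
  moreover have "0 < px u (P + (1/2) *\<^sub>R v) * fst v + py u (P + (1/2) *\<^sub>R v) * snd v"
    using assms(1) inS const[of "1/2"] assms(5) unfolding sdm_def by simp
  ultimately show False by simp
qed

lemma const_Gamma: assumes "\<forall>p\<in>B1. u p = c0" shows False
proof (cases "c0 \<ge> 0")
  case True
  then have "{p \<in> B1. u p \<ge> 0} = B1" using assms by auto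
  then have "Omega_plus u = ball 0 1" by (simp add: Omega_plus_def B1_def)
  then have "free_boundary u = {}" by (simp add: free_boundary_def)
  with Gamma_ne show False ..
next
  case False
  then have e: "{p \<in> B1. u p \<ge> 0} = {}" using assms by auto
  have "Omega_plus u = {}" by (simp only: Omega_plus_def e interior_empty)
  then have "free_boundary u = {}" by (simp add: free_boundary_def)
  with Gamma_ne show False ..
qed

lemma M_nonneg: "M \<ge> 0"
proof (rule ccontr)
  assume "\<not> M \<ge> 0"
  then have Mn: "M < 0" by simp
  have z: "px u q = 0 \<and> py u q = 0" if "q \<in> S" for q
  proof -
    have "\<bar>px u q\<bar> \<le> M * \<bar>py u q\<bar>" using bound that by blast
    moreover have "M * \<bar>py u q\<bar> \<le> 0" using Mn by (simp add: mult_nonpos_nonneg)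
    moreover have "\<bar>px u q\<bar> \<ge> 0" by simp
    ultimately have h2: "M * \<bar>py u q\<bar> = 0" and h0: "\<bar>px u q\<bar> = 0" by linarith+
    then have h1: "px u q = 0" by simp
    from h2 have "M = 0 \<or> \<bar>py u q\<bar> = 0" by simp
    with Mn h1 show ?thesis by auto
  qed
  have "dm v" for v using z unfolding dm_def by simp
  then have "u P \<le> u Q" if "P \<in> B1" "Q \<in> B1" for P Q
    using dm_mono[of "Q - P" P] that by simp
  then have "\<forall>p\<in>B1. u p = u 0" by (metis B1_def centre_in_ball order_antisym zero_less_one)
  then show False by (rule const_Gamma)
qed

definition sg where "sg v \<longleftrightarrow> b * snd v > M * max 0 (- a * fst v)"
definition gd where "gd v \<longleftrightarrow> b * snd v \<ge> M * max 0 (- a * fst v)"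

lemma rewr: "px u q * v1 + py u q * v2 = (a * px u q) * (a * v1) + (b * py u q) * (b * v2)"
  using a1 b1 by (elim disjE) (simp_all add: algebra_simps)

lemma absrel: assumes "q \<in> S" shows "a * px u q \<le> M * (b * py u q)"
proof -
  have "\<bar>px u q\<bar> = a * px u q" using a1 ax assms by auto
  moreover have "\<bar>py u q\<bar> = b * py u q" using b1 bY assms by auto
  ultimately show ?thesis using bound assms by metis
qed

lemma gd_dm: assumes "gd v" shows "dm v"
  unfolding dm_def
proof (intro ballI impI)
  fix q assume q: "q \<in> S" "u q \<noteq> 0"
  have "a * fst v * a = fst v" using a1 by auto
  have "0 \<le> (a * px u q) * (a * fst v) + (b * py u q) * (b * snd v)"
    by (rule arith_gd) (use q ax bY absrel M_nonneg assms in \<open>auto simp: gd_def\<close>)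
  then show "0 \<le> px u q * fst v + py u q * snd v" using rewr by simp
qed

lemma sg_sdm: assumes "sg v" and K: "\<And>q. q \<in> S \<Longrightarrow> u q \<noteq> 0 \<Longrightarrow> b * py u q > 0" shows "sdm v"
  unfolding sdm_def
proof (intro ballI impI)
  fix q assume q: "q \<in> S" "u q \<noteq> 0"
  have "0 < (a * px u q) * (a * fst v) + (b * py u q) * (b * snd v)"
    by (rule arith_sg) (use q ax K absrel M_nonneg assms in \<open>auto simp: sg_def\<close>)
  then show "0 < px u q * fst v + py u q * snd v" using rewr by simp
qed

lemma sg_open: "open {v. sg v}"
  unfolding sg_def by (intro open_Collect_less continuous_intros)

lemma op_closed_dm: assumes "dm v" "p \<in> Omega_plus u" "p + v \<in> B1" shows "p + v \<in> Omega_plus u"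
proof -
  obtain r where r: "r > 0" "ball p r \<subseteq> Omega_plus u" using open_Op assms(2) openE by blast
  have sub: "ball (p+v) r \<inter> B1 \<subseteq> {q \<in> B1. u q \<ge> 0}"
  proof
    fix z assume z: "z \<in> ball (p+v) r \<inter> B1"
    have "dist p (z - v) = dist (p+v) z" by (simp add: dist_norm algebra_simps)
    then have "z - v \<in> ball p r" using z by simp
    then have zv: "z - v \<in> Omega_plus u" using r by blast
    then have zvB: "z - v \<in> B1" "u (z - v) \<ge> 0" using Op_sub by auto
    have "u (z - v) \<le> u (z - v + v)" by (rule dm_mono[OF assms(1) zvB(1)]) (use z in auto)
    then show "z \<in> {q\<in>B1. u q \<ge> 0}" using z zvB by auto
  qed
  have "open (ball (p+v) r \<inter> B1)" by (simp add: B1_def open_Int)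
  moreover have "p + v \<in> ball (p+v) r \<inter> B1" using r assms by auto
  ultimately show ?thesis unfolding Omega_plus_def using sub interior_maximal by blast
qed

lemma closure_sg: assumes P: "P \<in> closure (Omega_plus u)" and Q: "Q \<in> B1" and sgv: "sg (Q - P)"
  shows "Q \<in> Omega_plus u"
proof -
  obtain d where d: "d > 0" "ball (Q - P) d \<subseteq> {v. sg v}" using sg_open sgv openE by blast
  obtain w where w: "w \<in> Omega_plus u" "dist w P < d" using P d closure_approachable by blast
  have "dist (Q - P) (Q - w) = dist w P" by (simp add: dist_norm algebra_simps)
  then have "Q - w \<in> ball (Q - P) d" using w by simp
  then have "sg (Q - w)" using d by auto
  then have "gd (Q - w)" by (simp add: sg_def gd_def)
  then have "dm (Q - w)" by (rule gd_dm)
  from op_closed_dm[OF this w(1)] Q show ?thesis by simp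
qed

lemma Gamma_sub: "free_boundary u \<subseteq> B1"
proof -
  have "Omega_plus u \<subseteq> ball 0 1" using Op_sub by (auto simp: B1_def)
  then have "closure (Omega_plus u) \<subseteq> cball 0 1"
    using closure_mono[of "Omega_plus u" "ball 0 1"] by simp
  then show ?thesis unfolding free_boundary_def B1_def frontier_def by auto
qed

lemma Gamma_nsg: assumes "P \<in> free_boundary u" "Q \<in> free_boundary u" shows "\<not> sg (Q - P)"
proof
  assume "sg (Q - P)"
  moreover have "P \<in> closure (Omega_plus u)" using assms by (auto simp: free_boundary_def frontier_def)
  moreover have "Q \<in> B1" using assms Gamma_sub by auto
  ultimately have "Q \<in> Omega_plus u" using closure_sg by blast
  moreover have "Q \<notin> Omega_plus u" using assms(2) open_Op
    by (auto simp: free_boundary_def frontier_def interior_open)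
  ultimately show False by blast
qed

lemma part_b: "\<forall>C \<in> components (free_boundary u).
            \<exists>I f. is_interval I \<and> C = graph_over I f \<and> (mono_on I f \<or> antimono_on I f)
                  \<and> M-lipschitz_on I f"
proof
  fix C assume C: "C \<in> components (free_boundary u)"
  have "\<exists>I f. is_interval I \<and> C = graph_over I f \<and> (mono_on I f \<or> antimono_on I f)
           \<and> M-lipschitz_on I f \<and> (\<forall>x y. (x,y) \<in> C \<longrightarrow> x \<in> I \<and> f x = y)"
  proof (rule graph_lemma[OF M_nonneg a1 b1 in_components_connected[OF C]])
    fix P Q assume "P \<in> C" "Q \<in> C"
    then have "P \<in> free_boundary u" "Q \<in> free_boundary u" using in_components_subset[OF C] by auto
    then show "\<not> (b * (snd Q - snd P) > M * max 0 (- a * (fst Q - fst P)))"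
      using Gamma_nsg unfolding sg_def by simp
  qed
  then show "\<exists>I f. is_interval I \<and> C = graph_over I f \<and> (mono_on I f \<or> antimono_on I f)
                  \<and> M-lipschitz_on I f" by (elim exE conjE) (rule exI, rule exI, intro conjI, assumption+)
qed

end



definition toC :: "real \<times> real \<Rightarrow> complex" where "toC p = Complex (fst p) (snd p)"
definition toR :: "complex \<Rightarrow> real \<times> real" where "toR z = (Re z, Im z)"

lemma toR_toC[simp]: "toR (toC p) = p" by (simp add: toR_def toC_def)
lemma toC_toR[simp]: "toC (toR z) = z" by (simp add: toR_def toC_def)
lemma Re_toC[simp]: "Re (toC p) = fst p" by (simp add: toC_def)
lemma Im_toC[simp]: "Im (toC p) = snd p" by (simp add: toC_def)
lemma fst_toR[simp]: "fst (toR z) = Re z" by (simp add: toR_def)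
lemma snd_toR[simp]: "snd (toR z) = Im z" by (simp add: toR_def)

lemma toC_eq: "toC = (\<lambda>p. of_real (fst p) + \<i> * of_real (snd p))"
  by (auto simp: fun_eq_iff toC_def complex_eq_iff)

lemma toC_deriv: "(toC has_derivative toC) (at p)"
proof -
  have "((\<lambda>p. of_real (fst p) + \<i> * of_real (snd p)) has_derivative
         (\<lambda>p. of_real (fst p) + \<i> * of_real (snd p))) (at p)"
    by (auto intro!: derivative_eq_intros)
  then show ?thesis by (simp only: toC_eq)
qed

lemma toR_deriv: "(toR has_derivative toR) (at z)"
proof -
  have "((\<lambda>z. (Re z, Im z)) has_derivative (\<lambda>z. (Re z, Im z))) (at z)"
    by (auto intro!: derivative_eq_intros)
  then show ?thesis by (simp add: toR_def[abs_def])
qed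

lemma bl_toR: "bounded_linear toR"
  using toR_deriv has_derivative_bounded_linear by blast
lemma bl_toC: "bounded_linear toC"
  using toC_deriv has_derivative_bounded_linear by blast
lemma cont_toR: "continuous_on A toR" by (rule linear_continuous_on[OF bl_toR])
lemma cont_toC: "continuous_on A toC" by (rule linear_continuous_on[OF bl_toC])

lemma dist_toC: "dist (toC p) (toC q) = dist p q"
proof -
  obtain a b c d where "p = (a,b)" "q = (c,d)" by (cases p, cases q)
  then show ?thesis
    by (simp add: toC_def dist_norm norm_complex_def norm_Pair)
qed

lemma dist_toR: "dist (toR z) (toR w) = dist z w"
  using dist_toC[of "toR z" "toR w"] by simp

lemma pd:
  fixes f :: "real \<times> real \<Rightarrow> real"
  assumes "f differentiable (at (x,y))"
  shows "DERIV (\<lambda>t. f (t,y)) x :> px f (x,y)" "DERIV (\<lambda>t. f (x,t)) y :> py f (x,y)"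
proof -
  obtain D where D: "(f has_derivative D) (at (x,y))" using assms differentiable_def by blast
  show "DERIV (\<lambda>t. f (t,y)) x :> px f (x,y)"
    unfolding frechet_partials(3)[OF D] by (rule frechet_partials(1)[OF D])
  show "DERIV (\<lambda>t. f (x,t)) y :> py f (x,y)"
    unfolding frechet_partials(4)[OF D] by (rule frechet_partials(2)[OF D])
qed

context L
begin

lemma diffs: assumes "q \<in> S"
  shows "u differentiable (at q)" "px u differentiable (at q)" "py u differentiable (at q)"
  using C2 assms open_S by (auto simp: C2_on_def differentiable_on_eq_differentiable_at)

lemma box_in: assumes "r > 0" "x0 \<le> s" "s \<le> x0 + r/3" "y0 \<le> t" "t \<le> y0 + r/3"
  shows "(s,t) \<in> ball (x0,y0) r"
proof -
  have "dist (x0,y0) (s,t) = norm (x0 - s, y0 - t)" by (simp add: dist_norm)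
  also have "\<dots> \<le> norm (x0 - s) + norm (y0 - t)" by (rule norm_Pair_le)
  also have "\<dots> \<le> 2 * (r/3)" using assms by simp
  also have "\<dots> < r" using assms by simp
  finally show ?thesis by simp
qed

lemma mixed_approx:
  assumes q: "q = (x0,y0)" and r: "r > 0" "ball q r \<subseteq> S"
  shows "\<exists>p1\<in>ball q r. \<exists>p2\<in>ball q r. py (px u) p1 = px (py u) p2"
proof -
  define h where "h = r / 3"
  have h: "h > 0" using r by (simp add: h_def)
  have inS: "(s,t) \<in> S" "(s,t) \<in> ball q r" if "x0 \<le> s" "s \<le> x0 + h" "y0 \<le> t" "t \<le> y0 + h" for s t
    using box_in[OF r(1) that[unfolded h_def]] r q by auto
  define \<Delta> where "\<Delta> = u (x0+h, y0+h) - u (x0+h, y0) - u (x0, y0+h) + u (x0, y0)"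
  obtain \<xi> where \<xi>: "x0 < \<xi>" "\<xi> < x0 + h"
    and e1: "(u (x0+h, y0+h) - u (x0+h, y0)) - (u (x0, y0+h) - u (x0, y0))
            = h * (px u (\<xi>, y0+h) - px u (\<xi>, y0))"
  proof -
    have "\<exists>z. x0 < z \<and> z < x0 + h \<and>
      ((\<lambda>s. u (s, y0+h) - u (s, y0)) (x0+h) - (\<lambda>s. u (s, y0+h) - u (s, y0)) x0
        = (x0 + h - x0) * (\<lambda>s. px u (s, y0+h) - px u (s, y0)) z)"
    proof (rule MVT2)
      fix s assume s: "x0 \<le> s" "s \<le> x0 + h"
      have a1: "(s, y0+h) \<in> S" "(s, y0) \<in> S" using inS s h by auto
      show "DERIV (\<lambda>s. u (s, y0+h) - u (s, y0)) s :> px u (s, y0+h) - px u (s, y0)"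
        by (intro DERIV_diff pd(1) diffs(1) a1)
    qed (use h in simp)
    then show ?thesis using that by auto
  qed
  obtain \<eta> where \<eta>: "y0 < \<eta>" "\<eta> < y0 + h"
    and e2: "px u (\<xi>, y0+h) - px u (\<xi>, y0) = h * py (px u) (\<xi>, \<eta>)"
  proof -
    have "\<exists>z. y0 < z \<and> z < y0 + h \<and>
      ((\<lambda>t. px u (\<xi>, t)) (y0+h) - (\<lambda>t. px u (\<xi>, t)) y0 = (y0 + h - y0) * (\<lambda>t. py (px u) (\<xi>, t)) z)"
    proof (rule MVT2)
      fix t assume t: "y0 \<le> t" "t \<le> y0 + h"
      have "(\<xi>, t) \<in> S" using inS t \<xi> by auto
      then show "DERIV (\<lambda>t. px u (\<xi>, t)) t :> py (px u) (\<xi>, t)"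
        by (intro pd(2) diffs(2))
    qed (use h in simp)
    then show ?thesis using that by auto
  qed
  obtain \<eta>' where \<eta>': "y0 < \<eta>'" "\<eta>' < y0 + h"
    and e3: "(u (x0+h, y0+h) - u (x0, y0+h)) - (u (x0+h, y0) - u (x0, y0))
            = h * (py u (x0+h, \<eta>') - py u (x0, \<eta>'))"
  proof -
    have "\<exists>z. y0 < z \<and> z < y0 + h \<and>
      ((\<lambda>t. u (x0+h, t) - u (x0, t)) (y0+h) - (\<lambda>t. u (x0+h, t) - u (x0, t)) y0
        = (y0 + h - y0) * (\<lambda>t. py u (x0+h, t) - py u (x0, t)) z)"
    proof (rule MVT2)
      fix t assume t: "y0 \<le> t" "t \<le> y0 + h"
      have a1: "(x0+h, t) \<in> S" "(x0, t) \<in> S" using inS t h by auto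
      show "DERIV (\<lambda>t. u (x0+h, t) - u (x0, t)) t :> py u (x0+h, t) - py u (x0, t)"
        by (intro DERIV_diff pd(2) diffs(1) a1)
    qed (use h in simp)
    then show ?thesis using that by auto
  qed
  obtain \<xi>' where \<xi>': "x0 < \<xi>'" "\<xi>' < x0 + h"
    and e4: "py u (x0+h, \<eta>') - py u (x0, \<eta>') = h * px (py u) (\<xi>', \<eta>')"
  proof -
    have "\<exists>z. x0 < z \<and> z < x0 + h \<and>
      ((\<lambda>s. py u (s, \<eta>')) (x0+h) - (\<lambda>s. py u (s, \<eta>')) x0 = (x0 + h - x0) * (\<lambda>s. px (py u) (s, \<eta>')) z)"
    proof (rule MVT2)
      fix s assume s: "x0 \<le> s" "s \<le> x0 + h"
      have "(s, \<eta>') \<in> S" using inS s \<eta>' by auto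
      then show "DERIV (\<lambda>s. py u (s, \<eta>')) s :> px (py u) (s, \<eta>')"
        by (intro pd(1) diffs(3))
    qed (use h in simp)
    then show ?thesis using that by auto
  qed
  have "h * (h * py (px u) (\<xi>, \<eta>)) = h * (h * px (py u) (\<xi>', \<eta>'))"
    using e1 e2 e3 e4 by (simp add: algebra_simps)
  then have eq: "py (px u) (\<xi>, \<eta>) = px (py u) (\<xi>', \<eta>')" using h by simp
  have "(\<xi>, \<eta>) \<in> ball q r" "(\<xi>', \<eta>') \<in> ball q r" using inS \<xi> \<eta> \<xi>' \<eta>' by auto
  then show ?thesis using eq by blast
qed

lemma mixed: assumes q: "q \<in> S" shows "py (px u) q = px (py u) q"
proof -
  obtain x0 y0 where qq: "q = (x0,y0)" by (cases q)
  obtain r0 where r0: "r0 > 0" "ball q r0 \<subseteq> S" using open_S q openE by blast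
  have c1: "continuous_on S (py (px u))" and c2: "continuous_on S (px (py u))"
    using C2 by (simp_all add: C2_on_def)
  have "\<bar>py (px u) q - px (py u) q\<bar> < 2 * e" if e: "e > 0" for e
  proof -
    obtain d1 where d1: "d1 > 0" "\<forall>p\<in>S. dist p q < d1 \<longrightarrow> dist (py (px u) p) (py (px u) q) < e"
      using c1 q e unfolding continuous_on_iff by blast
    obtain d2 where d2: "d2 > 0" "\<forall>p\<in>S. dist p q < d2 \<longrightarrow> dist (px (py u) p) (px (py u) q) < e"
      using c2 q e unfolding continuous_on_iff by blast
    define r where "r = min r0 (min d1 d2)"
    have r: "r > 0" "ball q r \<subseteq> S" using r0 d1 d2 by (auto simp: r_def)
    obtain p1 p2 where p: "p1 \<in> ball q r" "p2 \<in> ball q r" "py (px u) p1 = px (py u) p2"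
      using mixed_approx[OF qq r] by blast
    have "p1 \<in> S" "p2 \<in> S" using p r by auto
    moreover have "dist p1 q < d1" "dist p2 q < d2" using p by (auto simp: r_def dist_commute)
    ultimately have "dist (py (px u) p1) (py (px u) q) < e" "dist (px (py u) p2) (px (py u) q) < e"
      using d1 d2 by auto
    then show ?thesis using p(3) by (simp add: dist_real_def)
  qed
  note A = this
  show ?thesis
  proof (rule ccontr)
    assume "py (px u) q \<noteq> px (py u) q"
    then have pos: "\<bar>py (px u) q - px (py u) q\<bar> > 0" by simp
    have "\<bar>py (px u) q - px (py u) q\<bar> < 2 * (\<bar>py (px u) q - px (py u) q\<bar> / 2)"
      using A pos half_gt_zero by blast
    then show False by simp
  qed
qed


definition g :: "complex \<Rightarrow> complex" where
  "g z = of_real (px u (toR z)) - \<i> * of_real (py u (toR z))"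

lemma Re_g[simp]: "Re (g z) = px u (toR z)" by (simp add: g_def)
lemma Im_g[simp]: "Im (g z) = - py u (toR z)" by (simp add: g_def)

lemma g_deriv: assumes z: "toR z \<in> S"
  shows "(g has_field_derivative (of_real (px (px u) (toR z)) - \<i> * of_real (py (px u) (toR z)))) (at z)"
proof -
  define q where "q = toR z"
  have q: "q \<in> S" using z by (simp add: q_def)
  define A where "A = px (px u) q"
  define B where "B = py (px u) q"
  define C where "C = px (py u) q"
  define E where "E = py (py u) q"
  have CB: "C = B" using mixed[OF q] by (simp add: B_def C_def)
  have EA: "E = - A" using harm q unfolding harmonic_on_def A_def E_def by force
  have dpx: "(px u has_derivative (\<lambda>h. A * fst h + B * snd h)) (at q)"
    unfolding A_def B_def by (rule frechet_partials'[OF diffs(2)[OF q]])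
  have dpy: "(py u has_derivative (\<lambda>h. C * fst h + E * snd h)) (at q)"
    unfolding C_def E_def by (rule frechet_partials'[OF diffs(3)[OF q]])
  have c1: "((\<lambda>z. px u (toR z)) has_derivative (\<lambda>h. A * Re h + B * Im h)) (at z)"
    using diff_chain_at[OF toR_deriv dpx[unfolded q_def]] by (simp add: o_def)
  have c2: "((\<lambda>z. py u (toR z)) has_derivative (\<lambda>h. C * Re h + E * Im h)) (at z)"
    using diff_chain_at[OF toR_deriv dpy[unfolded q_def]] by (simp add: o_def)
  have "(g has_derivative (\<lambda>h. of_real (A * Re h + B * Im h) - \<i> * of_real (C * Re h + E * Im h))) (at z)"
    unfolding g_def[abs_def]
    by (intro has_derivative_diff has_derivative_mult_right has_derivative_of_real c1 c2)
  moreover have "(\<lambda>h. of_real (A * Re h + B * Im h) - \<i> * of_real (C * Re h + E * Im h))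
      = (*) (of_real A - \<i> * of_real B)"
    by (auto simp: fun_eq_iff complex_eq_iff CB EA algebra_simps)
  ultimately show ?thesis by (simp add: has_field_derivative_def A_def B_def q_def)
qed

definition "S' = toR -` S"

lemma open_S': "open S'"
proof -
  have "open (UNIV \<inter> toR -` S)" by (rule continuous_open_preimage[OF cont_toR open_UNIV open_S])
  then show ?thesis by (simp add: S'_def)
qed

lemma g_holo: "g holomorphic_on S'"
proof -
  have "\<forall>x\<in>S'. \<exists>f'. DERIV g x :> f'"
  proof
    fix x assume "x \<in> S'"
    then have "toR x \<in> S" by (simp add: S'_def)
    then show "\<exists>f'. DERIV g x :> f'" using g_deriv by blast
  qed
  then show ?thesis using holomorphic_on_open[OF open_S'] by blast
qed

lemma comp_const:
  assumes q: "q \<in> S" and c: "\<forall>p\<in>connected_component_set S q. u p = c0" and c0: "c0 \<noteq> 0"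
  shows False
proof -
  let ?U = "connected_component_set S q"
  have Uo: "open ?U" by (rule open_connected_component[OF open_S])
  have UB: "?U \<subseteq> B1" using connected_component_subset S_sub by blast
  have qU: "q \<in> ?U" using q by simp
  have cl: "B1 \<inter> closure ?U \<subseteq> ?U"
  proof
    fix p assume p: "p \<in> B1 \<inter> closure ?U"
    have up: "u p = c0"
    proof (rule ccontr)
      assume ne: "u p \<noteq> c0"
      have "continuous (at p) u" using cont openB1 p continuous_on_eq_continuous_at by blast
      then obtain d where d: "d > 0" "\<And>p'. dist p' p < d \<Longrightarrow> dist (u p') (u p) < dist c0 (u p)"
        using ne unfolding continuous_at_eps_delta by (metis dist_pos_lt)
      obtain p' where p': "p' \<in> ?U" "dist p' p < d" using p d(1) closure_approachable by blast
      have "u p' = c0" using c p' by blast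
      then show False using d(2)[OF p'(2)] by simp
    qed
    then have pS: "p \<in> S" using nz_S p c0 by blast
    let ?V = "connected_component_set S p"
    have "open ?V" by (rule open_connected_component[OF open_S])
    then obtain e where e: "e > 0" "ball p e \<subseteq> ?V" using pS openE by (metis connected_component_refl_eq mem_Collect_eq)
    obtain z where z: "z \<in> ?U" "dist z p < e" using p e(1) closure_approachable by blast
    have "z \<in> ?V" using z e by (auto simp: dist_commute)
    then have "connected_component S p z" by simp
    moreover have "connected_component S q z" using z by simp
    ultimately have "connected_component S q p"
      using connected_component_sym connected_component_trans by metis
    then show "p \<in> ?U" by simp
  qed
  have "?U = B1 \<inter> closure ?U" using cl UB closure_subset by blast
  then have "closedin (top_of_set B1) ?U" by (metis closedin_closed_Int closed_closure)
  moreover have "openin (top_of_set B1) ?U" by (rule open_subset[OF UB Uo])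
  moreover have "connected B1" by (simp add: B1_def)
  ultimately have "?U = {} \<or> ?U = B1" unfolding connected_clopen by blast
  then have "?U = B1" using qU by blast
  then have "\<forall>p\<in>B1. u p = c0" using c by blast
  then show False by (rule const_Gamma)
qed


lemma K: assumes q: "q \<in> S" "u q \<noteq> 0" shows "b * py u q > 0"
proof (rule ccontr)
  assume "\<not> b * py u q > 0"
  moreover have "b * py u q \<ge> 0" using bY q by blast
  ultimately have "b * py u q = 0" by simp
  then have py0: "py u q = 0" using b1 by auto
  have px0: "px u q = 0" using bound q py0 by force
  let ?U = "connected_component_set S q"
  define U' where "U' = toR -` ?U"
  have Uo: "open ?U" by (rule open_connected_component[OF open_S])
  have U'o: "open U'"
  proof -
    have "open (UNIV \<inter> toR -` ?U)" by (rule continuous_open_preimage[OF cont_toR open_UNIV Uo])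
    then show ?thesis by (simp add: U'_def)
  qed
  have U'eq: "U' = toC ` ?U"
  proof (rule set_eqI, rule iffI)
    fix z assume "z \<in> U'"
    then have "toR z \<in> ?U" by (simp add: U'_def)
    then show "z \<in> toC ` ?U" by (metis toC_toR imageI)
  next
    fix z assume "z \<in> toC ` ?U"
    then show "z \<in> U'" by (auto simp: U'_def)
  qed
  have U'c: "connected U'"
    unfolding U'eq by (rule connected_continuous_image[OF cont_toC connected_connected_component])
  have U'S: "U' \<subseteq> S'" unfolding U'_def S'_def using connected_component_subset by blast
  have holo: "g holomorphic_on U'" using g_holo U'S holomorphic_on_subset by blast
  have gq: "g (toC q) = 0" by (simp add: g_def px0 py0)
  have tq: "toC q \<in> U'" using q by (simp add: U'_def)
  show False
  proof (cases "g constant_on U'")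
    case True
    then have g0: "\<forall>z\<in>U'. g z = 0" using gq tq unfolding constant_on_def by metis
    have pz: "px u p = 0 \<and> py u p = 0" if "p \<in> ?U" for p
    proof -
      have "toC p \<in> U'" using that by (simp add: U'_def)
      then have "g (toC p) = 0" using g0 by blast
      then show ?thesis by (simp add: complex_eq_iff)
    qed
    define v where "v z = complex_of_real (u (toR z))" for z
    have vd: "DERIV v z :> 0" if "z \<in> U'" for z
    proof -
      have zS: "toR z \<in> ?U" using that by (simp add: U'_def)
      then have "toR z \<in> S" using connected_component_subset by blast
      then have "(u has_derivative (\<lambda>h. px u (toR z) * fst h + py u (toR z) * snd h)) (at (toR z))"
        by (rule u_diff)
      then have "(u has_derivative (\<lambda>h. 0)) (at (toR z))" using pz[OF zS] by simp
      then have "((\<lambda>z. u (toR z)) has_derivative (\<lambda>h. 0)) (at z)"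
        using diff_chain_at[OF toR_deriv] by (simp add: o_def)
      then have "(v has_derivative (\<lambda>h. of_real 0)) (at z)"
        unfolding v_def by (rule has_derivative_of_real)
      then show ?thesis by (simp add: has_field_derivative_def lambda_zero)
    qed
    have vc: "continuous_on U' v"
      using vd DERIV_isCont continuous_at_imp_continuous_on by blast
    obtain c where c: "\<And>z. z \<in> U' \<Longrightarrow> v z = c"
      using DERIV_zero_connected_constant[OF U'c U'o finite.emptyI vc] vd by blast
    have "\<forall>p\<in>?U. u p = u q"
    proof
      fix p assume "p \<in> ?U"
      then have "toC p \<in> U'" by (simp add: U'_def)
      then have "v (toC p) = v (toC q)" using c tq by simp
      then show "u p = u q" by (simp add: v_def)
    qed
    then show False using comp_const q by blast
  next
    case False
    have "open (g ` U')" by (rule open_mapping_thm[OF holo U'o U'c U'o subset_refl False])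
    then obtain e where e: "e > 0" "ball 0 e \<subseteq> g ` U'"
      using gq tq openE by (metis image_eqI)
    define w where "w = \<i> * of_real (b * e / 2)"
    have "norm w = e / 2" using b1 e by (auto simp: w_def norm_mult)
    then have "w \<in> ball 0 e" using e by simp
    then obtain z where z: "z \<in> U'" "g z = w" using e by blast
    have "Im w = b * e / 2" by (simp add: w_def)
    then have "Im (g z) = b * e / 2" using z by simp
    then have pyz: "py u (toR z) = - (b * e / 2)" by simp
    have "toR z \<in> S" using z connected_component_subset by (auto simp: U'_def)
    then have "b * py u (toR z) \<ge> 0" using bY by blast
    moreover have "b * py u (toR z) = - (b * b) * e / 2" using pyz by (simp add: algebra_simps)
    moreover have "b * b = 1" using b1 by auto
    ultimately show False using e by simp
  qed
qed

end



context L
begin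

lemma local_analytic:
  assumes p0: "p0 \<in> B1" "u p0 = c" "c \<noteq> 0"
  shows "\<exists>r>0. \<exists>\<phi>. \<phi> holomorphic_on ball (of_real (fst p0)) r \<and>
           (\<forall>x::real. \<bar>x - fst p0\<bar> < r \<longrightarrow> (x, Re (\<phi> (of_real x))) \<in> B1 \<and> u (x, Re (\<phi> (of_real x))) = c)"
proof -
  have p0S: "p0 \<in> S" using nz_S p0 by simp
  define z0 where "z0 = toC p0"
  have z0S: "z0 \<in> S'" using p0S by (simp add: S'_def z0_def)
  obtain \<rho> where \<rho>: "\<rho> > 0" "ball z0 \<rho> \<subseteq> S'" using open_S' z0S openE by blast
  have gh: "g holomorphic_on ball z0 \<rho>" using g_holo \<rho> holomorphic_on_subset by blast
  have fd: "g field_differentiable at x" if "x \<in> interior (ball z0 \<rho>) - {}" for x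
    using holomorphic_on_imp_differentiable_at[OF gh open_ball] that by simp
  obtain F0 where F0: "\<And>z. z \<in> ball z0 \<rho> \<Longrightarrow> (F0 has_field_derivative g z) (at z within ball z0 \<rho>)"
    using holomorphic_convex_primitive[OF convex_ball finite.emptyI holomorphic_on_imp_continuous_on[OF gh] fd]
    by blast
  define F where "F z = F0 z - F0 z0 + of_real c" for z
  have Fd: "(F has_field_derivative g z) (at z)" if "z \<in> ball z0 \<rho>" for z
  proof -
    have "(F0 has_field_derivative g z) (at z)"
      using F0[OF that] at_within_open[OF that open_ball] by simp
    then have "((\<lambda>z. F0 z - F0 z0 + of_real c) has_field_derivative g z - 0 + 0) (at z)"
      by (intro derivative_intros)
    then show ?thesis by (simp add: F_def[abs_def])
  qed
  have Fz0: "F z0 = of_real c" by (simp add: F_def)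
  have ballR: "toC p \<in> ball z0 \<rho> \<longleftrightarrow> p \<in> ball p0 \<rho>" for p
    by (simp add: z0_def dist_toC)
  have pS: "p \<in> S" if "p \<in> ball p0 \<rho>" for p
  proof -
    have "toC p \<in> S'" using that ballR \<rho> by blast
    then show ?thesis by (simp add: S'_def)
  qed
  define w where "w p = Re (F (toC p)) - u p" for p
  have wd: "(w has_derivative (\<lambda>h. 0)) (at p within ball p0 \<rho>)" if p: "p \<in> ball p0 \<rho>" for p
  proof -
    have Fp: "(F has_derivative (*) (g (toC p))) (at (toC p))"
      using Fd[of "toC p"] p ballR by (simp add: has_field_derivative_def)
    have d1: "((\<lambda>p. F (toC p)) has_derivative (\<lambda>h. g (toC p) * toC h)) (at p)"
      using diff_chain_at[OF toC_deriv Fp] by (simp add: o_def)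
    have d2: "((\<lambda>p. Re (F (toC p))) has_derivative (\<lambda>h. Re (g (toC p) * toC h))) (at p)"
      by (rule has_derivative_Re[OF d1])
    have d4: "(w has_derivative (\<lambda>h. Re (g (toC p) * toC h) - (px u p * fst h + py u p * snd h))) (at p)"
      unfolding w_def[abs_def] by (rule has_derivative_diff[OF d2 u_diff[OF pS[OF p]]])
    have eq: "(\<lambda>h. Re (g (toC p) * toC h) - (px u p * fst h + py u p * snd h)) = (\<lambda>h. 0)"
      by (auto simp: fun_eq_iff toC_def toR_def)
    from d4 have "(w has_derivative (\<lambda>h. 0)) (at p)" by (simp only: eq)
    then show ?thesis by (rule has_derivative_at_withinI)
  qed
  obtain C0 where C0: "\<forall>p\<in>ball p0 \<rho>. w p = C0"
    using has_derivative_zero_constant[OF convex_ball wd] by blast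
  have w0: "w p0 = 0" by (simp add: w_def z0_def[symmetric] Fz0 p0)
  have wC: "w p0 = C0" using C0 \<rho>(1) by simp
  have ReF: "Re (F (toC p)) = u p" if "p \<in> ball p0 \<rho>" for p
  proof -
    have "w p = C0" using C0 that by blast
    then have "w p = 0" using w0 wC by simp
    then show ?thesis by (simp add: w_def)
  qed
  have Fholo: "F holomorphic_on ball z0 \<rho>"
    using Fd holomorphic_on_open[OF open_ball] by blast
  have dF: "deriv F z0 = g z0" using Fd[of z0] \<rho> DERIV_imp_deriv by simp
  have gz0: "g z0 \<noteq> 0"
  proof
    assume "g z0 = 0"
    then have "Im (g z0) = 0" by simp
    then have "py u p0 = 0" by (simp add: z0_def)
    then show False using K[OF p0S] p0 by simp
  qed
  obtain r1 where r1: "r1 > 0" "ball z0 r1 \<subseteq> ball z0 \<rho>" "open (F ` ball z0 r1)" "inj_on F (ball z0 r1)"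
    using has_complex_derivative_locally_invertible[OF Fholo centre_in_ball[THEN iffD2, OF \<rho>(1)] open_ball]
      dF gz0 by metis
  obtain G where G: "G holomorphic_on F ` ball z0 r1"
      "\<And>z. z \<in> ball z0 r1 \<Longrightarrow> deriv F z * deriv G (F z) = 1"
      "\<And>z. z \<in> ball z0 r1 \<Longrightarrow> G (F z) = z"
    using holomorphic_has_inverse[OF holomorphic_on_subset[OF Fholo r1(2)] open_ball r1(4)] by blast
  define W where "W = F ` ball z0 r1"
  have cW: "of_real c \<in> W" using r1(1) Fz0 by (metis W_def centre_in_ball imageI)
  obtain \<epsilon> where \<epsilon>: "\<epsilon> > 0" "ball (of_real c) \<epsilon> \<subseteq> W" using r1(3) cW openE W_def by metis
  have GW: "G v \<in> ball z0 r1 \<and> F (G v) = v" if "v \<in> W" for v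
    using that G(3) unfolding W_def by auto
  define h where "h t = G (of_real c + \<i> * t)" for t
  have inW: "of_real c + \<i> * t \<in> W" if "t \<in> ball 0 \<epsilon>" for t
  proof -
    have "dist (of_real c) (of_real c + \<i> * t) = norm t" by (simp add: dist_norm norm_mult)
    then show ?thesis using that \<epsilon> by auto
  qed
  have Gd: "DERIV G v :> deriv G v" if "v \<in> W" for v
    using G(1) r1(3) that unfolding W_def
    by (meson DERIV_deriv_iff_field_differentiable holomorphic_on_imp_differentiable_at)
  have hd: "DERIV h t :> deriv G (of_real c + \<i> * t) * \<i>" if "t \<in> ball 0 \<epsilon>" for t
  proof -
    have d1: "DERIV (\<lambda>t. of_real c + \<i> * t) t :> \<i>" by (auto intro!: derivative_eq_intros)
    show ?thesis unfolding h_def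
      using DERIV_chain2[where g="\<lambda>t. of_real c + \<i> * t" and x=t, OF Gd[OF inW[OF that]] d1] by simp
  qed
  define hs where "hs = cnj \<circ> h \<circ> cnj"
  have hsd: "DERIV hs t :> cnj (deriv G (of_real c + \<i> * cnj t) * \<i>)" if "t \<in> ball 0 \<epsilon>" for t
  proof -
    have "cnj t \<in> ball 0 \<epsilon>" using that by simp
    then show ?thesis unfolding hs_def by (rule has_field_derivative_cnj_cnj[OF hd])
  qed
  have hholo: "h holomorphic_on ball 0 \<epsilon>" using hd holomorphic_on_open[OF open_ball] by blast
  have hsholo: "hs holomorphic_on ball 0 \<epsilon>" using hsd holomorphic_on_open[OF open_ball] by blast
  define X where "X t = (h t + hs t) / 2" for t
  define Y where "Y t = (h t - hs t) / (2 * \<i>)" for t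
  have Xholo: "X holomorphic_on ball 0 \<epsilon>" unfolding X_def using hholo hsholo by (intro holomorphic_intros) auto
  have Yholo: "Y holomorphic_on ball 0 \<epsilon>" unfolding Y_def using hholo hsholo by (intro holomorphic_intros) auto
  have h0: "h 0 = z0" using G(3)[of z0] r1(1) Fz0 by (simp add: h_def)
  have X0: "X 0 = of_real (fst p0)"
    by (simp add: X_def hs_def h0 complex_add_cnj z0_def)
  define d0 where "d0 = deriv G (of_real c) * \<i>"
  have dG: "deriv G (of_real c) = inverse (g z0)"
    using G(2)[of z0] r1(1) Fz0 dF gz0 by (simp add: field_simps)
  have Xd: "DERIV X 0 :> (d0 + cnj d0) / 2"
  proof -
    have "DERIV h 0 :> d0" using hd[of 0] \<epsilon> by (simp add: d0_def)
    moreover have "DERIV hs 0 :> cnj d0" using hsd[of 0] \<epsilon> by (simp add: d0_def)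
    ultimately show ?thesis unfolding X_def[abs_def] by (auto intro!: derivative_eq_intros)
  qed
  have "Re d0 = Im (g z0) / ((Re (g z0))\<^sup>2 + (Im (g z0))\<^sup>2)"
    by (simp add: d0_def dG inverse_eq_divide Re_divide)
  moreover have "Im (g z0) \<noteq> 0" using K[OF p0S] p0 by (simp add: z0_def) (metis mult_zero_right less_irrefl)
  ultimately have "Re d0 \<noteq> 0" by (simp add: sum_power2_eq_zero_iff)
  then have dX: "deriv X 0 \<noteq> 0"
    using DERIV_imp_deriv[OF Xd] by (simp add: complex_add_cnj)
  obtain r2 where r2: "r2 > 0" "ball (0::complex) r2 \<subseteq> ball 0 \<epsilon>" "open (X ` ball 0 r2)" "inj_on X (ball 0 r2)"
    by (rule has_complex_derivative_locally_invertible[OF Xholo centre_in_ball[THEN iffD2, OF \<epsilon>(1)] open_ball dX], rule that)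
  obtain Ki where Ki: "Ki holomorphic_on X ` ball 0 r2" "\<And>t. t \<in> ball 0 r2 \<Longrightarrow> Ki (X t) = t"
    using holomorphic_has_inverse[OF holomorphic_on_subset[OF Xholo r2(2)] open_ball r2(4)] by blast
  have x0V: "of_real (fst p0) \<in> X ` ball 0 r2" using X0 r2(1) by (metis centre_in_ball imageI)
  obtain r3 where r3: "r3 > 0" "ball (of_real (fst p0)) r3 \<subseteq> X ` ball 0 r2"
    using r2(3) x0V openE by metis
  define \<phi> where "\<phi> = Y \<circ> Ki"
  have Kimap: "Ki ` ball (of_real (fst p0)) r3 \<subseteq> ball 0 \<epsilon>"
    using r3(2) Ki(2) r2(2) by force
  have phiholo: "\<phi> holomorphic_on ball (of_real (fst p0)) r3"
    unfolding \<phi>_def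
    by (rule holomorphic_on_compose_gen[OF holomorphic_on_subset[OF Ki(1) r3(2)] Yholo Kimap])
  have main: "(x, Re (\<phi> (of_real x))) \<in> B1 \<and> u (x, Re (\<phi> (of_real x))) = c"
    if x: "\<bar>x - fst p0\<bar> < r3" for x :: real
  proof -
    have "(of_real x :: complex) \<in> ball (of_real (fst p0)) r3"
      using x by (simp add: dist_real_def abs_minus_commute)
    then have "(of_real x :: complex) \<in> X ` ball 0 r2" using r3(2) by (rule subsetD[rotated])
    then obtain t where t: "t \<in> ball 0 r2" "X t = of_real x" by (metis imageE)
    have Xcnj: "X (cnj t) = cnj (X t)"
      by (simp add: X_def hs_def)
    have "cnj t \<in> ball 0 r2" using t by simp
    moreover have "X (cnj t) = X t" using Xcnj t by simp
    ultimately have "cnj t = t" using r2(4) t(1) inj_onD by metis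
    then have tr: "Im t = 0" by (simp add: complex_eq_iff)
    then have ct: "cnj t = t" by (simp add: complex_eq_iff)
    have te: "t \<in> ball 0 \<epsilon>" using t r2 by blast
    have hW: "h t \<in> ball z0 r1" "F (h t) = of_real c + \<i> * t"
      using GW[OF inW[OF te]] by (simp_all add: h_def)
    have hst: "hs t = cnj (h t)" by (simp add: hs_def ct)
    have Xt: "X t = of_real (Re (h t))" by (simp add: X_def hst complex_add_cnj)
    have Yt: "Y t = of_real (Im (h t))" by (simp add: Y_def hst complex_diff_cnj complex_eq_iff)
    define pt where "pt = toR (h t)"
    have ptb: "pt \<in> ball p0 \<rho>" using hW(1) r1(2) ballR[of pt] by (auto simp: pt_def)
    have upt: "u pt = c"
      using ReF[OF ptb] hW(2) tr by (simp add: pt_def)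
    have fpt: "fst pt = x" using Xt t(2) by (simp add: pt_def)
    have "\<phi> (of_real x) = Y t" using Ki(2)[OF t(1)] t(2) by (simp add: \<phi>_def)
    then have "Re (\<phi> (of_real x)) = snd pt" using Yt by (simp add: pt_def)
    then have "(x, Re (\<phi> (of_real x))) = pt" using fpt by (metis prod.collapse)
    moreover have "pt \<in> B1" using pS[OF ptb] S_sub by blast
    ultimately show ?thesis using upt by simp
  qed
  show ?thesis using r3(1) phiholo main by blast
qed

end



context L
begin

lemma level_nsg: assumes "P \<in> B1" "Q \<in> B1" "u P = c" "u Q = c" "c \<noteq> 0" shows "\<not> sg (Q - P)"
proof
  assume "sg (Q - P)"
  then have "sdm (Q - P)" using sg_sdm K by blast
  then show False using sdm_contra[of "Q - P" P] assms by simp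
qed

lemma level_vert: assumes "(x, y1) \<in> B1" "(x, y2) \<in> B1" "u (x, y1) = c" "u (x, y2) = c" "c \<noteq> 0"
  shows "y1 = y2"
proof -
  have n1: "\<not> sg ((x, y2) - (x, y1))" by (rule level_nsg) (use assms in auto)
  have n2: "\<not> sg ((x, y1) - (x, y2))" by (rule level_nsg) (use assms in auto)
  have "\<not> b * (y2 - y1) > 0" using n1 by (simp add: sg_def)
  moreover have "\<not> b * (y1 - y2) > 0" using n2 by (simp add: sg_def)
  moreover have "b * (y1 - y2) = - (b * (y2 - y1))" by (simp add: algebra_simps)
  ultimately have "b * (y2 - y1) = 0" by linarith
  then show ?thesis using b1 by auto
qed

lemma part_a: "\<forall>c. c \<noteq> 0 \<longrightarrow> (\<forall>C \<in> components {p \<in> B1. u p = c}.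
            \<exists>I f. is_interval I \<and> C = graph_over I f \<and> (mono_on I f \<or> antimono_on I f)
                  \<and> real_analytic_on I f \<and> M-lipschitz_on I f)"
proof (intro allI impI ballI)
  fix c :: real and C assume c: "c \<noteq> 0" and C: "C \<in> components {p \<in> B1. u p = c}"
  have Csub: "C \<subseteq> {p\<in>B1. u p = c}" by (rule in_components_subset[OF C])
  have "\<exists>I f. is_interval I \<and> C = graph_over I f \<and> (mono_on I f \<or> antimono_on I f)
           \<and> M-lipschitz_on I f \<and> (\<forall>x y. (x,y) \<in> C \<longrightarrow> x \<in> I \<and> f x = y)"
  proof (rule graph_lemma[OF M_nonneg a1 b1 in_components_connected[OF C]])
    fix P Q assume "P \<in> C" "Q \<in> C"
    then have "P \<in> B1" "Q \<in> B1" "u P = c" "u Q = c" using Csub by auto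
    then have "\<not> sg (Q - P)" using level_nsg c by blast
    then show "\<not> (b * (snd Q - snd P) > M * max 0 (- a * (fst Q - fst P)))"
      unfolding sg_def by simp
  qed
  then obtain I f where If: "is_interval I" "C = graph_over I f" "mono_on I f \<or> antimono_on I f"
      "M-lipschitz_on I f" by blast
  have fC: "(x, f x) \<in> C" if "x \<in> I" for x
    using If(2) that by (auto simp: graph_over_def)
  have ana: "real_analytic_on I f"
    unfolding real_analytic_on_def
  proof
    fix x0 assume x0: "x0 \<in> I"
    have p0: "(x0, f x0) \<in> B1" "u (x0, f x0) = c" using fC[OF x0] Csub by auto
    obtain r \<phi> where r: "r > 0" "\<phi> holomorphic_on ball (of_real x0) r"
        "\<forall>x::real. \<bar>x - x0\<bar> < r \<longrightarrow> (x, Re (\<phi> (of_real x))) \<in> B1 \<and> u (x, Re (\<phi> (of_real x))) = c"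
      using local_analytic[OF p0 c] by auto
    define a where "a n = Re ((deriv ^^ n) \<phi> (of_real x0) / fact n)" for n
    show "\<exists>r>0. \<exists>a. \<forall>x\<in>I. \<bar>x - x0\<bar> < r \<longrightarrow> (\<lambda>n. a n * (x - x0) ^ n) sums f x"
    proof (intro exI[of _ r] conjI exI[of _ a] ballI impI)
      show "r > 0" by (rule r(1))
    next
      fix x assume x: "x \<in> I" "\<bar>x - x0\<bar> < r"
      have w: "(of_real x :: complex) \<in> ball (of_real x0) r"
        using x by (simp add: dist_real_def abs_minus_commute)
      have s: "(\<lambda>n. (deriv ^^ n) \<phi> (of_real x0) / fact n * (of_real x - of_real x0) ^ n) sums \<phi> (of_real x)"
        by (rule holomorphic_power_series[OF r(2) w])
      have s2: "(\<lambda>n. Re ((deriv ^^ n) \<phi> (of_real x0) / fact n * (of_real x - of_real x0) ^ n)) sums Re (\<phi> (of_real x))"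
        by (rule sums_Re[OF s])
      have e: "Re ((deriv ^^ n) \<phi> (of_real x0) / fact n * (of_real x - of_real x0) ^ n) = a n * (x - x0) ^ n" for n
      proof -
        have pw: "(of_real x - of_real x0 :: complex) ^ n = of_real ((x - x0) ^ n)" by simp
        show ?thesis unfolding a_def by (simp only: pw times_complex.sel Re_complex_of_real Im_complex_of_real)
      qed
      have fx: "Re (\<phi> (of_real x)) = f x"
      proof (rule level_vert)
        show "(x, Re (\<phi> (of_real x))) \<in> B1" "u (x, Re (\<phi> (of_real x))) = c" using r(3) x by auto
        show "(x, f x) \<in> B1" "u (x, f x) = c" using fC[OF x(1)] Csub by auto
      qed (rule c)
      show "(\<lambda>n. a n * (x - x0) ^ n) sums f x" using s2 e fx by simp
    qed
  qed
  show "\<exists>I f. is_interval I \<and> C = graph_over I f \<and> (mono_on I f \<or> antimono_on I f)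
                  \<and> real_analytic_on I f \<and> M-lipschitz_on I f"
    using If ana by blast
qed

end

theorem lemma3p6:
  fixes u :: "real \<times> real \<Rightarrow> real" and M :: real
  assumes cont: "continuous_on B1 u"
    and C2: "C2_on (Omega_plus u \<union> Omega_minus u) u"
    and harm: "harmonic_on (Omega_plus u \<union> Omega_minus u) u"
    and Gamma_ne: "free_boundary u \<noteq> {}"
    and sign_x: "nonstrict_sign_on (Omega_plus u \<union> Omega_minus u) (px u)"
    and sign_y: "nonstrict_sign_on (Omega_plus u \<union> Omega_minus u) (py u)"
    and bound: "\<forall>p \<in> Omega_plus u \<union> Omega_minus u. \<bar>px u p\<bar> \<le> M * \<bar>py u p\<bar>"
  shows "(\<forall>c. c \<noteq> 0 \<longrightarrow> (\<forall>C \<in> components {p \<in> B1. u p = c}.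
            \<exists>I f. is_interval I \<and> C = graph_over I f \<and> (mono_on I f \<or> antimono_on I f)
                  \<and> real_analytic_on I f \<and> M-lipschitz_on I f))
       \<and> (\<forall>C \<in> components (free_boundary u).
            \<exists>I f. is_interval I \<and> C = graph_over I f \<and> (mono_on I f \<or> antimono_on I f)
                  \<and> M-lipschitz_on I f)"
proof -
  obtain a :: real where a: "a = 1 \<or> a = -1" "\<forall>p \<in> Omega_plus u \<union> Omega_minus u. a * px u p \<ge> 0"
  proof (cases "\<forall>p \<in> Omega_plus u \<union> Omega_minus u. px u p \<ge> 0")
    case True
    then show ?thesis using that[of 1] by simp
  next
    case False
    then have "\<forall>p \<in> Omega_plus u \<union> Omega_minus u. px u p \<le> 0"
      using sign_x unfolding nonstrict_sign_on_def by blast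
    then show ?thesis using that[of "-1"] by simp
  qed
  obtain b :: real where b: "b = 1 \<or> b = -1" "\<forall>p \<in> Omega_plus u \<union> Omega_minus u. b * py u p \<ge> 0"
  proof (cases "\<forall>p \<in> Omega_plus u \<union> Omega_minus u. py u p \<ge> 0")
    case True
    then show ?thesis using that[of 1] by simp
  next
    case False
    then have "\<forall>p \<in> Omega_plus u \<union> Omega_minus u. py u p \<le> 0"
      using sign_y unfolding nonstrict_sign_on_def by blast
    then show ?thesis using that[of "-1"] by simp
  qed
  interpret L u M a b
    by (unfold_locales) (use cont C2 harm Gamma_ne bound a b in auto)
  show ?thesis using part_a part_b by blast
qed


end
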